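(* There is a constant $C_4>0$, depending only on $f,h,\tau$, such that for every $\Phi\in\mathcal C$, every $k\in\mathbb Z^+$ and every $n\ge1$, \[ |L_k^n(\Phi)|_\beta\le\left(|\Phi|_\beta\,\eta^{\beta n}+C_4|\Phi|_\infty\right)|L_k^n(\mathbf 1)|_\infty . \] (Pointwise: $|L_k^n\Phi(x)-L_k^n\Phi(y)|\le(|\Phi|_\beta\eta^{\beta n}+C_4|\Phi|_\infty)L_k^n\mathbf 1(x)\,d(x,y)^\beta$.)
   Context: Let $I=[0,1)$ carry a metric $d_I$, fix $\theta\in(0,1)$, and let $\Omega=I^{\mathbb Z}$ with metric $d(x,y)=\sup_{k\in\mathbb Z}\theta^{|k|}d_I(x_k,y_k)$. Let $\tau:I\to I$ have full branches, so that $b=\#\tau^{-1}(t)$ is constant; let $p_\tau$ be a fixed point of $\tau$. Assume there is $\eta\in(0,1)$ such that every inverse branch $\zeta$ of $\tau$ satisfies $d_I(\zeta(s),\zeta(t))\le\eta\,d_I(s,t)$. Let $(\bar\tau x)_i=\tau(x_i)$. Let $\pi_k:\Omega\to\Omega$ keep the coordinates $|i|\le k$ and set the others to $p_\tau$; $\Phi_k=\Phi\circ\pi_k$. Fix $\beta\in(0,1]$; $|\Phi|_\infty=\sup|\Phi|$, $|\Phi|_\beta=\sup_{k\in\mathbb N}\sup_{x\neq y}|\Phi_k(x)-\Phi_k(y)|/d(x,y)^\beta$, $\|\Phi\|=|\Phi|_\infty+|\Phi|_\beta$, $\mathcal C=\{\Phi\in C(\Omega):\|\Phi\|<\infty\}$.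 An inverse branch of order $k$ is a choice $\zeta=(\zeta_j)_{|j|\le k}$ of inverse branches of $\tau$, with $(\zeta_x)_j=\zeta_j(x_j)$ for $|j|\le k$, $(\zeta_x)_j=x_j$ otherwise; $b_k=b^{2k+1}$. For real $f\in\mathcal C$, $P_k\Phi(x)=b_k^{-1}\sum_{|\zeta|=k}e^{f(\pi_k\zeta_x)}\Phi(\pi_k\zeta_x)$ and $P\Phi=\lim_kP_k\Phi$ pointwise. Fix a Borel probability measure $\nu_0$ with $P^*\nu_0=\lambda\nu_0$, $\lambda=\int P\mathbf 1\,d\nu_0$, and let $h\in\mathcal C$ be the unique strictly positive function with $Ph=\lambda h$, $\nu_0(h)=1$, $h(x)\le \exp\!\big(|f|_\beta\frac{\eta^\beta}{1-\eta^\beta}d(x,y)^\beta\big)h(y)$ for all $x,y$. Put $g=f-\log\lambda-\log h\circ\bar\tau+\log h$ and $L_k\Phi(x)=b_k^{-1}\sum_{|\zeta|=k}e^{g(\pi_k\zeta_x)}\Phi(\pi_k\zeta_x)$; $L_k^n$ is its $n$-th iterate. *)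

theory Defs
  imports "HOL-Analysis.Analysis" "HOL-Probability.Probability"
begin

definition Iset :: "real set" where
  "Iset = {0..<1}"

definition Omega :: "(int \<Rightarrow> real) set" where
  "Omega = {x. \<forall>i. x i \<in> Iset}"

definition dOm :: "(real \<Rightarrow> real \<Rightarrow> real) \<Rightarrow> real \<Rightarrow> (int \<Rightarrow> real) \<Rightarrow> (int \<Rightarrow> real) \<Rightarrow> real" where
  "dOm dI \<theta> x y = (SUP k\<in>(UNIV::int set). \<theta> ^ nat \<bar>k\<bar> * dI (x k) (y k))"

definition trunc :: "real \<Rightarrow> nat \<Rightarrow> (int \<Rightarrow> real) \<Rightarrow> (int \<Rightarrow> real)" where
  "trunc p k x = (\<lambda>i. if \<bar>i\<bar> \<le> int k then x i else p)"

definition sup_norm :: "((int \<Rightarrow> real) \<Rightarrow> 'a::real_normed_vector) \<Rightarrow> real" where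
  "sup_norm \<Phi> = (SUP x\<in>Omega. norm (\<Phi> x))"

definition holder_quots :: "(real \<Rightarrow> real \<Rightarrow> real) \<Rightarrow> real \<Rightarrow> real \<Rightarrow> real \<Rightarrow>
    ((int \<Rightarrow> real) \<Rightarrow> 'a::real_normed_vector) \<Rightarrow> real set" where
  "holder_quots dI \<theta> p \<beta> \<Phi> =
     {norm (\<Phi> (trunc p k x) - \<Phi> (trunc p k y)) / (dOm dI \<theta> x y) powr \<beta> | k x y.
        x \<in> Omega \<and> y \<in> Omega \<and> x \<noteq> y}"

definition holder_semi :: "(real \<Rightarrow> real \<Rightarrow> real) \<Rightarrow> real \<Rightarrow> real \<Rightarrow> real \<Rightarrow>
    ((int \<Rightarrow> real) \<Rightarrow> 'a::real_normed_vector) \<Rightarrow> real" where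
  "holder_semi dI \<theta> p \<beta> \<Phi> = Sup (holder_quots dI \<theta> p \<beta> \<Phi>)"

definition cont_Om :: "(real \<Rightarrow> real \<Rightarrow> real) \<Rightarrow> real \<Rightarrow> ((int \<Rightarrow> real) \<Rightarrow> 'a::real_normed_vector) \<Rightarrow> bool" where
  "cont_Om dI \<theta> \<Phi> \<longleftrightarrow>
     (\<forall>x\<in>Omega. \<forall>e>0. \<exists>\<delta>>0. \<forall>y\<in>Omega. dOm dI \<theta> x y < \<delta> \<longrightarrow> norm (\<Phi> y - \<Phi> x) < e)"

definition classC :: "(real \<Rightarrow> real \<Rightarrow> real) \<Rightarrow> real \<Rightarrow> real \<Rightarrow> real \<Rightarrow>
    ((int \<Rightarrow> real) \<Rightarrow> 'a::real_normed_vector) \<Rightarrow> bool" where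
  "classC dI \<theta> p \<beta> \<Phi> \<longleftrightarrow> cont_Om dI \<theta> \<Phi> \<and> bdd_above ((\<lambda>x. norm (\<Phi> x)) ` Omega)
      \<and> bdd_above (holder_quots dI \<theta> p \<beta> \<Phi>)"

definition open_Om :: "(real \<Rightarrow> real \<Rightarrow> real) \<Rightarrow> real \<Rightarrow> (int \<Rightarrow> real) set \<Rightarrow> bool" where
  "open_Om dI \<theta> U \<longleftrightarrow> U \<subseteq> Omega \<and>
     (\<forall>x\<in>U. \<exists>e>0. \<forall>y\<in>Omega. dOm dI \<theta> x y < e \<longrightarrow> y \<in> U)"

text \<open>inverse branches of order k: a choice c j < b of branch index for each |j| <= k
  (branch j of tau is zeta j, for j < b)\<close>
definition branches :: "nat \<Rightarrow> nat \<Rightarrow> (int \<Rightarrow> nat) set" where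
  "branches b k = Pi\<^sub>E {- int k..int k} (\<lambda>_. {..<b})"

definition branch_pt :: "(nat \<Rightarrow> real \<Rightarrow> real) \<Rightarrow> real \<Rightarrow> nat \<Rightarrow> (int \<Rightarrow> nat) \<Rightarrow> (int \<Rightarrow> real) \<Rightarrow> (int \<Rightarrow> real)" where
  "branch_pt \<zeta> p k c x = (\<lambda>j. if \<bar>j\<bar> \<le> int k then \<zeta> (c j) (x j) else p)"

text \<open>The operator b_k^{-1} sum_{|zeta|=k} e^{G(pi_k zeta_x)} Phi(pi_k zeta_x);
  with G = f this is P_k, with G = g it is L_k.\<close>
definition Lop :: "nat \<Rightarrow> (nat \<Rightarrow> real \<Rightarrow> real) \<Rightarrow> real \<Rightarrow> ((int \<Rightarrow> real) \<Rightarrow> real) \<Rightarrow> nat \<Rightarrow>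
    ((int \<Rightarrow> real) \<Rightarrow> 'a::real_normed_vector) \<Rightarrow> (int \<Rightarrow> real) \<Rightarrow> 'a" where
  "Lop b \<zeta> p G k \<Phi> x = (1 / real b ^ (2 * k + 1)) *\<^sub>R
     (\<Sum>c\<in>branches b k. exp (G (branch_pt \<zeta> p k c x)) *\<^sub>R \<Phi> (branch_pt \<zeta> p k c x))"

definition tau_bar :: "(real \<Rightarrow> real) \<Rightarrow> (int \<Rightarrow> real) \<Rightarrow> (int \<Rightarrow> real)" where
  "tau_bar \<tau> x = (\<lambda>i. \<tau> (x i))"

end

theory Submission
  imports Defs
begin

lemma exp_one_diff: "\<bar>1 - exp t\<bar> \<le> \<bar>t\<bar> * exp \<bar>t\<bar>" for t :: real
proof (cases "t \<ge> 0")
  case True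
  have "1 - t \<le> exp (-t)" using exp_ge_add_one_self[of "-t"] by simp
  hence "(1 - t) * exp t \<le> exp (-t) * exp t" by (simp add: mult_right_mono)
  hence "exp t - t * exp t \<le> 1" by (simp add: algebra_simps exp_minus_inverse)
  moreover have "1 \<le> exp t" using True by simp
  ultimately show ?thesis using True by simp
next
  case False
  have "1 + t \<le> exp t" using exp_ge_add_one_self[of t] by simp
  moreover have "exp t \<le> 1" using False by simp
  moreover have "1 \<le> exp \<bar>t\<bar>" by simp
  ultimately have "\<bar>1 - exp t\<bar> \<le> \<bar>t\<bar>"
    using False by (smt (verit))
  also have "\<dots> \<le> \<bar>t\<bar> * exp \<bar>t\<bar>" using \<open>1 \<le> exp \<bar>t\<bar>\<close> by (simp add: mult_le_cancel_left1)
  finally show ?thesis .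
qed

lemma exp_diff: "\<bar>exp a - exp a'\<bar> \<le> exp a * (\<bar>a' - a\<bar> * exp \<bar>a' - a\<bar>)" for a a' :: real
proof -
  have e: "exp a * (1 - exp (a' - a)) = exp a - exp a'" by (simp add: exp_diff field_simps)
  have "\<bar>exp a - exp a'\<bar> = exp a * \<bar>1 - exp (a' - a)\<bar>"
    by (simp only: e[symmetric] abs_mult) simp
  also have "\<dots> \<le> exp a * (\<bar>a' - a\<bar> * exp \<bar>a' - a\<bar>)"
    using exp_one_diff[of "a' - a"] by (simp add: mult_left_mono)
  finally show ?thesis .
qed

lemma ratio_arith:
  fixes a a' l l' t t' G D e :: real
  assumes "\<bar>a' - a\<bar> \<le> G*t" "l' \<le> exp(D*t') * l" "0 \<le> l" "0 \<le> l'" "t' \<le> e*t" "0 \<le> D" "G + D*e = D"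
  shows "exp a' * l' \<le> exp(D*t) * (exp a * l)"
proof -
  have 1: "exp a' \<le> exp (a + G*t)" using assms(1) by simp
  have "exp(D*t') \<le> exp (D*(e*t))" using assms(5,6) by (simp add: mult_left_mono)
  hence 2: "l' \<le> exp (D*(e*t)) * l" using assms(2,3) by (meson mult_right_mono order_trans)
  have "exp a' * l' \<le> exp (a + G*t) * (exp (D*(e*t)) * l)"
    using 1 2 assms(4) by (simp add: mult_mono)
  also have "\<dots> = exp (a + (G + D*e)*t) * l" by (simp add: exp_add algebra_simps)
  also have "\<dots> = exp(D*t) * (exp a * l)" using assms(7) by (simp add: exp_add algebra_simps)
  finally show ?thesis .
qed

lemma term_arith:
  fixes ea ec l dd Qa Qb S E G D Bb nd nb eb :: real
  assumes "0 < ea" "0 \<le> l" "0 \<le> S" "0 \<le> dd"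
    "nd \<le> Qa * l * (eb * dd)"
    "\<bar>ea - ec\<bar> \<le> ea * (G*dd*exp(G*Bb))"
    "nb \<le> S * (exp(D*Bb) * l)" "0 \<le> nb"
    "E = G * exp((G+D)*Bb)"
    "Qa * eb + E*S \<le> Qb"
  shows "ea * nd + \<bar>ea-ec\<bar> * nb \<le> ea * l * dd * Qb"
proof -
  have 1: "ea * nd \<le> ea * (Qa * l * (eb * dd))" using assms(1,5) by simp
  have "\<bar>ea-ec\<bar> * nb \<le> (ea * (G*dd*exp(G*Bb))) * (S * (exp(D*Bb) * l))"
    using assms(6,7,8) by (meson abs_ge_zero mult_mono order_trans)
  also have "\<dots> = ea * l * dd * (E * S)" using assms(9) by (simp add: exp_add algebra_simps)
  finally have 2: "\<bar>ea-ec\<bar> * nb \<le> ea * l * dd * (E * S)" .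
  have "ea * nd + \<bar>ea-ec\<bar> * nb \<le> ea * l * dd * (Qa * eb + E * S)"
    using 1 2 by (simp add: algebra_simps)
  also have "\<dots> \<le> ea * l * dd * Qb" using assms(1,2,4,10) by (simp add: mult_left_mono)
  finally show ?thesis .
qed

lemma scaleR_diff_norm:
  fixes a c :: "'a::real_normed_vector" and e1 e2 :: real
  assumes "0 \<le> e1"
  shows "norm (e1 *\<^sub>R a - e2 *\<^sub>R c) \<le> e1 * norm (a - c) + \<bar>e1 - e2\<bar> * norm c"
proof -
  have "e1 *\<^sub>R a - e2 *\<^sub>R c = e1 *\<^sub>R (a - c) + (e1 - e2) *\<^sub>R c" by (simp add: algebra_simps)
  hence "norm (e1 *\<^sub>R a - e2 *\<^sub>R c) \<le> norm (e1 *\<^sub>R (a - c)) + norm ((e1 - e2) *\<^sub>R c)"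
    by (metis norm_triangle_ineq)
  thus ?thesis using assms by simp
qed

locale msetup =
  fixes dI :: "real \<Rightarrow> real \<Rightarrow> real" and \<theta> B \<beta> \<eta> p lam :: real
    and \<tau> :: "real \<Rightarrow> real" and b :: nat and \<zeta> :: "nat \<Rightarrow> real \<Rightarrow> real"
    and f h g :: "(int \<Rightarrow> real) \<Rightarrow> real"
  assumes nonneg: "\<forall>s\<in>Iset. \<forall>t\<in>Iset. 0 \<le> dI s t"
    and zero: "\<forall>s\<in>Iset. \<forall>t\<in>Iset. dI s t = 0 \<longleftrightarrow> s = t"
    and sym: "\<forall>s\<in>Iset. \<forall>t\<in>Iset. dI s t = dI t s"
    and bdd: "\<forall>s\<in>Iset. \<forall>t\<in>Iset. dI s t \<le> B"
    and \<theta>: "0 < \<theta>" "\<theta> < 1"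
    and \<beta>: "0 < \<beta>" "\<beta> \<le> 1"
    and \<eta>: "0 < \<eta>" "\<eta> < 1"
    and tau_maps: "\<tau> ` Iset \<subseteq> Iset"
    and b_pos: "1 \<le> b"
    and zeta_maps: "\<forall>j<b. \<forall>t\<in>Iset. \<zeta> j t \<in> Iset \<and> \<tau> (\<zeta> j t) = t"
    and contr: "\<forall>j<b. \<forall>s\<in>Iset. \<forall>t\<in>Iset. dI (\<zeta> j s) (\<zeta> j t) \<le> \<eta> * dI s t"
    and fixpt: "p \<in> Iset" "\<tau> p = p"
    and f_bdd: "bdd_above ((\<lambda>x. norm (f x)) ` Omega)"
    and f_hq: "bdd_above (holder_quots dI \<theta> p \<beta> f)"
    and h_pos: "\<forall>x\<in>Omega. 0 < h x"
    and h_reg: "\<forall>x\<in>Omega. \<forall>y\<in>Omega.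
        h x \<le> exp (holder_semi dI \<theta> p \<beta> f * (\<eta> powr \<beta> / (1 - \<eta> powr \<beta>))
                   * dOm dI \<theta> x y powr \<beta>) * h y"
    and g_def: "g = (\<lambda>x. f x - ln lam - ln (h (tau_bar \<tau> x)) + ln (h x))"
begin

abbreviation d where "d \<equiv> dOm dI \<theta>"

lemma Omega_iff: "x \<in> Omega \<longleftrightarrow> (\<forall>i. x i \<in> Iset)"
  by (simp add: Omega_def)

lemma B_nonneg: "0 \<le> B"
  using nonneg bdd fixpt(1) by (meson order_trans)

lemma term_le_B:
  assumes "x \<in> Omega" "y \<in> Omega"
  shows "\<theta> ^ nat \<bar>j\<bar> * dI (x j) (y j) \<le> B"
proof -
  have xy: "x j \<in> Iset" "y j \<in> Iset" using assms by (auto simp: Omega_iff)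
  have "\<theta> ^ nat \<bar>j\<bar> \<le> 1" using \<theta> by (simp add: power_le_one)
  hence "\<theta> ^ nat \<bar>j\<bar> * dI (x j) (y j) \<le> dI (x j) (y j)"
    using xy nonneg \<theta> by (simp add: mult_left_le_one_le)
  also have "\<dots> \<le> B" using xy bdd by auto
  finally show ?thesis .
qed

lemma d_bdd_range:
  assumes "x \<in> Omega" "y \<in> Omega"
  shows "bdd_above (range (\<lambda>j. \<theta> ^ nat \<bar>j\<bar> * dI (x j) (y j)))"
  using term_le_B[OF assms] by (intro bdd_aboveI2) auto

lemma d_upper:
  assumes "x \<in> Omega" "y \<in> Omega"
  shows "\<theta> ^ nat \<bar>j\<bar> * dI (x j) (y j) \<le> d x y"
  unfolding dOm_def by (rule cSUP_upper[OF _ d_bdd_range[OF assms]]) simp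

lemma d_le:
  assumes "\<And>j. \<theta> ^ nat \<bar>j\<bar> * dI (x j) (y j) \<le> c"
  shows "d x y \<le> c"
  unfolding dOm_def by (rule cSUP_least) (use assms in auto)

lemma d_nonneg:
  assumes "x \<in> Omega" "y \<in> Omega"
  shows "0 \<le> d x y"
proof -
  have "0 \<le> \<theta> ^ nat \<bar>0::int\<bar> * dI (x 0) (y 0)"
    using assms nonneg by (simp add: Omega_iff)
  also have "\<dots> \<le> d x y" by (rule d_upper[OF assms])
  finally show ?thesis .
qed

lemma d_le_B:
  assumes "x \<in> Omega" "y \<in> Omega"
  shows "d x y \<le> B"
  by (rule d_le) (rule term_le_B[OF assms])

lemma d_sym:
  assumes "x \<in> Omega" "y \<in> Omega"
  shows "d x y = d y x"
proof -
  have "\<And>j. dI (x j) (y j) = dI (y j) (x j)" using assms sym by (simp add: Omega_iff)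
  thus ?thesis unfolding dOm_def by simp
qed

lemma d_pos:
  assumes "x \<in> Omega" "y \<in> Omega" "x \<noteq> y"
  shows "0 < d x y"
proof -
  obtain j where j: "x j \<noteq> y j" using assms(3) by auto
  have xy: "x j \<in> Iset" "y j \<in> Iset" using assms by (auto simp: Omega_iff)
  have "0 < dI (x j) (y j)" using xy j nonneg zero by (metis order_le_less)
  hence "0 < \<theta> ^ nat \<bar>j\<bar> * dI (x j) (y j)" using \<theta> by simp
  also have "\<dots> \<le> d x y" by (rule d_upper[OF assms(1,2)])
  finally show ?thesis .
qed

lemma d_self: "x \<in> Omega \<Longrightarrow> d x x = 0"
proof -
  assume x: "x \<in> Omega"
  have "d x x \<le> 0"
  proof (rule d_le)
    fix j have "x j \<in> Iset" using x by (simp add: Omega_iff)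
    hence "dI (x j) (x j) = 0" using zero by simp
    thus "\<theta> ^ nat \<bar>j\<bar> * dI (x j) (x j) \<le> 0" by simp
  qed
  thus ?thesis using d_nonneg[OF x x] by simp
qed

lemma trunc_Omega: "x \<in> Omega \<Longrightarrow> trunc p k x \<in> Omega"
  using fixpt by (simp add: Omega_iff trunc_def)

lemma d_trunc:
  assumes "x \<in> Omega" "y \<in> Omega"
  shows "d (trunc p k x) (trunc p k y) \<le> d x y"
proof (rule d_le)
  fix j
  show "\<theta> ^ nat \<bar>j\<bar> * dI (trunc p k x j) (trunc p k y j) \<le> d x y"
  proof (cases "\<bar>j\<bar> \<le> int k")
    case True thus ?thesis using d_upper[OF assms] by (simp add: trunc_def)
  next
    case False
    have "dI p p = 0" using zero fixpt by simp
    thus ?thesis using False d_nonneg[OF assms] by (simp add: trunc_def)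
  qed
qed

lemma branches_lt: "c \<in> branches b k \<Longrightarrow> \<bar>j\<bar> \<le> int k \<Longrightarrow> c j < b"
  by (auto simp: branches_def PiE_def Pi_def abs_le_iff)

lemma branch_Omega:
  assumes "x \<in> Omega" "c \<in> branches b k"
  shows "branch_pt \<zeta> p k c x \<in> Omega"
  using assms zeta_maps fixpt branches_lt by (auto simp: Omega_iff branch_pt_def)

lemma trunc_branch: "trunc p k (branch_pt \<zeta> p k c x) = branch_pt \<zeta> p k c x"
  by (auto simp: trunc_def branch_pt_def)

lemma tau_branch:
  assumes "x \<in> Omega" "c \<in> branches b k"
  shows "tau_bar \<tau> (branch_pt \<zeta> p k c x) = trunc p k x"
  using assms zeta_maps fixpt branches_lt
  by (auto simp: Omega_iff branch_pt_def tau_bar_def trunc_def)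

lemma d_branch:
  assumes "x \<in> Omega" "y \<in> Omega" "c \<in> branches b k"
  shows "d (branch_pt \<zeta> p k c x) (branch_pt \<zeta> p k c y) \<le> \<eta> * d x y"
proof (rule d_le)
  fix j
  show "\<theta> ^ nat \<bar>j\<bar> * dI (branch_pt \<zeta> p k c x j) (branch_pt \<zeta> p k c y j) \<le> \<eta> * d x y"
  proof (cases "\<bar>j\<bar> \<le> int k")
    case True
    have xy: "x j \<in> Iset" "y j \<in> Iset" using assms by (auto simp: Omega_iff)
    have cj: "c j < b" using branches_lt[OF assms(3) True] .
    have "\<theta> ^ nat \<bar>j\<bar> * dI (\<zeta> (c j) (x j)) (\<zeta> (c j) (y j)) \<le> \<theta> ^ nat \<bar>j\<bar> * (\<eta> * dI (x j) (y j))"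
      using contr cj xy \<theta> by (simp add: mult_left_mono)
    also have "\<dots> = \<eta> * (\<theta> ^ nat \<bar>j\<bar> * dI (x j) (y j))" by simp
    also have "\<dots> \<le> \<eta> * d x y" using d_upper[OF assms(1,2)] \<eta> by (simp add: mult_left_mono)
    finally show ?thesis using True by (simp add: branch_pt_def)
  next
    case False
    have "dI p p = 0" using zero fixpt by simp
    thus ?thesis using False d_nonneg[OF assms(1,2)] \<eta> by (simp add: branch_pt_def)
  qed
qed

lemma two_points: "(\<lambda>_. 0) \<in> Omega" "(\<lambda>_. 1/2) \<in> Omega" "(\<lambda>_::int. 0::real) \<noteq> (\<lambda>_. 1/2)"
  by (auto simp: Omega_iff Iset_def fun_eq_iff)

lemma holder_nonneg:
  fixes \<Phi> :: "(int \<Rightarrow> real) \<Rightarrow> 'a::real_normed_vector"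
  assumes "bdd_above (holder_quots dI \<theta> p \<beta> \<Phi>)"
  shows "0 \<le> holder_semi dI \<theta> p \<beta> \<Phi>"
proof -
  let ?q = "norm (\<Phi> (trunc p 0 (\<lambda>_. 0)) - \<Phi> (trunc p 0 (\<lambda>_. 1/2))) / (d (\<lambda>_. 0) (\<lambda>_. 1/2)) powr \<beta>"
  have "?q \<in> holder_quots dI \<theta> p \<beta> \<Phi>"
    unfolding holder_quots_def using two_points by blast
  moreover have "0 \<le> ?q" by simp
  ultimately show ?thesis unfolding holder_semi_def by (meson assms cSup_upper2)
qed

lemma holder_le:
  fixes \<Phi> :: "(int \<Rightarrow> real) \<Rightarrow> 'a::real_normed_vector"
  assumes "bdd_above (holder_quots dI \<theta> p \<beta> \<Phi>)" "u \<in> Omega" "v \<in> Omega"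
  shows "norm (\<Phi> (trunc p k u) - \<Phi> (trunc p k v)) \<le> holder_semi dI \<theta> p \<beta> \<Phi> * d u v powr \<beta>"
proof (cases "u = v")
  case True thus ?thesis using d_self[OF assms(3)] \<beta> by simp
next
  case False
  let ?D = "d u v powr \<beta>"
  let ?q = "norm (\<Phi> (trunc p k u) - \<Phi> (trunc p k v)) / ?D"
  have D: "0 < ?D" using d_pos[OF assms(2,3) False] by simp
  have "?q \<in> holder_quots dI \<theta> p \<beta> \<Phi>"
    unfolding holder_quots_def using assms False by blast
  hence "?q \<le> holder_semi dI \<theta> p \<beta> \<Phi>" unfolding holder_semi_def using assms(1) by (simp add: cSup_upper)
  thus ?thesis using D by (simp add: divide_le_eq)
qed

definition "H = holder_semi dI \<theta> p \<beta> f * (\<eta> powr \<beta> / (1 - \<eta> powr \<beta>))"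
definition "G = holder_semi dI \<theta> p \<beta> f + 2 * H"

lemma eb: "0 < \<eta> powr \<beta>" "\<eta> powr \<beta> < 1"
  using \<eta> \<beta> powr_less_mono2[of \<beta> \<eta> 1] by auto

lemma H_nonneg: "0 \<le> H"
  unfolding H_def using holder_nonneg[OF f_hq] eb by simp

lemma G_nonneg: "0 \<le> G"
  unfolding G_def using holder_nonneg[OF f_hq] H_nonneg by simp

lemma dpow_le_B: "x \<in> Omega \<Longrightarrow> y \<in> Omega \<Longrightarrow> d x y powr \<beta> \<le> B powr \<beta>"
  using d_nonneg d_le_B \<beta> by (simp add: powr_mono2)

lemma lnh_le:
  assumes "x \<in> Omega" "y \<in> Omega"
  shows "ln (h x) - ln (h y) \<le> H * d x y powr \<beta>"
proof -
  have hx: "0 < h x" "0 < h y" using h_pos assms by auto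
  have "h x \<le> exp (H * d x y powr \<beta>) * h y" using h_reg assms unfolding H_def by auto
  hence "ln (h x) \<le> ln (exp (H * d x y powr \<beta>) * h y)" using hx by simp
  also have "\<dots> = H * d x y powr \<beta> + ln (h y)" using hx by (simp add: ln_mult)
  finally show ?thesis by simp
qed

lemma lnh_abs:
  assumes "x \<in> Omega" "y \<in> Omega"
  shows "\<bar>ln (h x) - ln (h y)\<bar> \<le> H * d x y powr \<beta>"
  using lnh_le[OF assms] lnh_le[OF assms(2,1)] d_sym[OF assms] by (auto simp: abs_le_iff)

lemma dpow_branch:
  assumes "x \<in> Omega" "y \<in> Omega" "c \<in> branches b k"
  shows "d (branch_pt \<zeta> p k c x) (branch_pt \<zeta> p k c y) powr \<beta> \<le> \<eta> powr \<beta> * d x y powr \<beta>"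
proof -
  have "d (branch_pt \<zeta> p k c x) (branch_pt \<zeta> p k c y) powr \<beta> \<le> (\<eta> * d x y) powr \<beta>"
    using d_branch[OF assms] d_nonneg branch_Omega assms \<beta> by (simp add: powr_mono2)
  also have "\<dots> = \<eta> powr \<beta> * d x y powr \<beta>" using \<eta> d_nonneg[OF assms(1,2)] by (simp add: powr_mult)
  finally show ?thesis .
qed

lemma dpow_branch':
  assumes "x \<in> Omega" "y \<in> Omega" "c \<in> branches b k"
  shows "d (branch_pt \<zeta> p k c x) (branch_pt \<zeta> p k c y) powr \<beta> \<le> d x y powr \<beta>"
proof -
  have "\<eta> powr \<beta> * d x y powr \<beta> \<le> d x y powr \<beta>" using eb by (simp add: mult_left_le_one_le)
  thus ?thesis using dpow_branch[OF assms] by linarith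
qed

lemma g_diff:
  assumes "x \<in> Omega" "y \<in> Omega" "c \<in> branches b k"
  shows "\<bar>g (branch_pt \<zeta> p k c x) - g (branch_pt \<zeta> p k c y)\<bar> \<le> G * d x y powr \<beta>"
proof -
  let ?u = "branch_pt \<zeta> p k c x" and ?v = "branch_pt \<zeta> p k c y"
  have uv: "?u \<in> Omega" "?v \<in> Omega" using branch_Omega assms by auto
  have D: "d ?u ?v powr \<beta> \<le> d x y powr \<beta>" by (rule dpow_branch'[OF assms])
  have "\<bar>f ?u - f ?v\<bar> = norm (f (trunc p k ?u) - f (trunc p k ?v))" by (simp add: trunc_branch)
  also have "\<dots> \<le> holder_semi dI \<theta> p \<beta> f * d ?u ?v powr \<beta>" by (rule holder_le[OF f_hq uv])
  also have "\<dots> \<le> holder_semi dI \<theta> p \<beta> f * d x y powr \<beta>"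
    using D holder_nonneg[OF f_hq] by (simp add: mult_left_mono)
  finally have 1: "\<bar>f ?u - f ?v\<bar> \<le> holder_semi dI \<theta> p \<beta> f * d x y powr \<beta>" .
  have "\<bar>ln (h (trunc p k x)) - ln (h (trunc p k y))\<bar> \<le> H * d (trunc p k x) (trunc p k y) powr \<beta>"
    by (rule lnh_abs) (use trunc_Omega assms in auto)
  also have "\<dots> \<le> H * d x y powr \<beta>"
    using d_trunc[OF assms(1,2)] d_nonneg trunc_Omega assms \<beta> H_nonneg
    by (simp add: mult_left_mono powr_mono2)
  finally have 2: "\<bar>ln (h (tau_bar \<tau> ?u)) - ln (h (tau_bar \<tau> ?v))\<bar> \<le> H * d x y powr \<beta>"
    using tau_branch assms by simp
  have "\<bar>ln (h ?u) - ln (h ?v)\<bar> \<le> H * d ?u ?v powr \<beta>" by (rule lnh_abs[OF uv])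
  also have "\<dots> \<le> H * d x y powr \<beta>" using D H_nonneg by (simp add: mult_left_mono)
  finally have 3: "\<bar>ln (h ?u) - ln (h ?v)\<bar> \<le> H * d x y powr \<beta>" .
  show ?thesis using 1 2 3 unfolding g_def G_def by (simp add: algebra_simps)
qed

definition "gs = Sup ((\<lambda>x. norm (f x)) ` Omega) - ln lam + H * B powr \<beta>"

lemma tau_bar_Omega: "x \<in> Omega \<Longrightarrow> tau_bar \<tau> x \<in> Omega"
  using tau_maps by (auto simp: Omega_iff tau_bar_def)

lemma g_le: "x \<in> Omega \<Longrightarrow> g x \<le> gs"
proof -
  assume x: "x \<in> Omega"
  have "f x \<le> Sup ((\<lambda>x. norm (f x)) ` Omega)"
    using cSUP_upper[OF x f_bdd] by simp
  moreover have "ln (h x) - ln (h (tau_bar \<tau> x)) \<le> H * B powr \<beta>"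
    using lnh_le[OF x tau_bar_Omega[OF x]] dpow_le_B[OF x tau_bar_Omega[OF x]] H_nonneg
    by (meson mult_left_mono order_trans)
  ultimately show ?thesis unfolding g_def gs_def by simp
qed

lemma branches_finite: "finite (branches b k)"
  by (simp add: branches_def finite_PiE)

lemma branches_ne: "branches b k \<noteq> {}"
proof -
  have "(\<lambda>j. if j \<in> {- int k..int k} then 0 else undefined) \<in> branches b k"
    using b_pos by (auto simp: branches_def PiE_def extensional_def)
  thus ?thesis by blast
qed

lemma Lop_real: "Lop b \<zeta> p g k \<Psi> x = (1 / real b ^ (2 * k + 1)) *
     (\<Sum>c\<in>branches b k. exp (g (branch_pt \<zeta> p k c x)) * \<Psi> (branch_pt \<zeta> p k c x))"
  by (simp add: Lop_def)

lemma s_pos: "0 < 1 / real b ^ (2 * k + 1)"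
  using b_pos by simp

lemma L1_pos: "\<forall>x\<in>Omega. 0 < (Lop b \<zeta> p g k ^^ n) (\<lambda>_. 1::real) x"
proof (induction n)
  case 0 thus ?case by simp
next
  case (Suc n)
  show ?case
  proof
    fix x assume x: "x \<in> Omega"
    have "0 < (\<Sum>c\<in>branches b k. exp (g (branch_pt \<zeta> p k c x)) * (Lop b \<zeta> p g k ^^ n) (\<lambda>_. 1::real) (branch_pt \<zeta> p k c x))"
      by (rule sum_pos[OF branches_finite branches_ne]) (use Suc branch_Omega x in auto)
    thus "0 < (Lop b \<zeta> p g k ^^ Suc n) (\<lambda>_. 1::real) x"
      using s_pos by (simp only: funpow.simps comp_def Lop_real) simp
  qed
qed

definition "Kc k = 1 / real b ^ (2 * k + 1) * real (card (branches b k)) * exp gs"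

lemma L1_bdd: "\<forall>x\<in>Omega. (Lop b \<zeta> p g k ^^ n) (\<lambda>_. 1::real) x \<le> Kc k ^ n"
proof (induction n)
  case 0 thus ?case by simp
next
  case (Suc n)
  show ?case
  proof
    fix x assume x: "x \<in> Omega"
    have "(\<Sum>c\<in>branches b k. exp (g (branch_pt \<zeta> p k c x)) * (Lop b \<zeta> p g k ^^ n) (\<lambda>_. 1::real) (branch_pt \<zeta> p k c x))
       \<le> (\<Sum>c\<in>branches b k. exp gs * Kc k ^ n)"
    proof (rule sum_mono)
      fix c assume c: "c \<in> branches b k"
      have u: "branch_pt \<zeta> p k c x \<in> Omega" using branch_Omega[OF x c] .
      show "exp (g (branch_pt \<zeta> p k c x)) * (Lop b \<zeta> p g k ^^ n) (\<lambda>_. 1::real) (branch_pt \<zeta> p k c x) \<le> exp gs * Kc k ^ n"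
        using Suc u g_le[OF u] L1_pos[where k=k and n=n] by (intro mult_mono) auto
    qed
    hence "1 / real b ^ (2 * k + 1) * (\<Sum>c\<in>branches b k. exp (g (branch_pt \<zeta> p k c x)) * (Lop b \<zeta> p g k ^^ n) (\<lambda>_. 1::real) (branch_pt \<zeta> p k c x))
       \<le> 1 / real b ^ (2 * k + 1) * (\<Sum>c\<in>branches b k. exp gs * Kc k ^ n)"
      using s_pos by (simp only: mult_le_cancel_left_pos)
    also have "\<dots> = Kc k ^ Suc n" by (simp add: Kc_def)
    finally show "(Lop b \<zeta> p g k ^^ Suc n) (\<lambda>_. 1::real) x \<le> Kc k ^ Suc n"
      by (simp only: funpow.simps comp_def Lop_real)
  qed
qed

lemma sup_bound:
  fixes \<Phi> :: "(int \<Rightarrow> real) \<Rightarrow> 'a::real_normed_vector"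
  assumes Pb: "bdd_above ((\<lambda>x. norm (\<Phi> x)) ` Omega)"
  shows "\<forall>x\<in>Omega. norm ((Lop b \<zeta> p g k ^^ n) \<Phi> x) \<le> sup_norm \<Phi> * (Lop b \<zeta> p g k ^^ n) (\<lambda>_. 1::real) x"
proof (induction n)
  case 0 thus ?case using Pb cSUP_upper[OF _ Pb] by (simp add: sup_norm_def)
next
  case (Suc n)
  show ?case
  proof
    fix x assume x: "x \<in> Omega"
    define \<psi> where "\<psi> = (Lop b \<zeta> p g k ^^ n) \<Phi>"
    define l where "l = (Lop b \<zeta> p g k ^^ n) (\<lambda>_. 1::real)"
    define u where "u = (\<lambda>c. branch_pt \<zeta> p k c x)"
    define sk where "sk = 1 / real b ^ (2 * k + 1)"
    have sk: "0 < sk" using s_pos sk_def by simp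
    have "norm ((Lop b \<zeta> p g k ^^ Suc n) \<Phi> x) = norm (sk *\<^sub>R (\<Sum>c\<in>branches b k. exp (g (u c)) *\<^sub>R \<psi> (u c)))"
      by (simp add: Lop_def \<psi>_def u_def sk_def)
    also have "\<dots> = sk * norm (\<Sum>c\<in>branches b k. exp (g (u c)) *\<^sub>R \<psi> (u c))" using sk by simp
    also have "\<dots> \<le> sk * (\<Sum>c\<in>branches b k. exp (g (u c)) * norm (\<psi> (u c)))"
      using sk norm_sum[of "\<lambda>c. exp (g (u c)) *\<^sub>R \<psi> (u c)" "branches b k"]
      by (simp add: mult_left_mono)
    also have "\<dots> \<le> sk * (\<Sum>c\<in>branches b k. exp (g (u c)) * (sup_norm \<Phi> * l (u c)))"
    proof -
      have "(\<Sum>c\<in>branches b k. exp (g (u c)) * norm (\<psi> (u c))) \<le> (\<Sum>c\<in>branches b k. exp (g (u c)) * (sup_norm \<Phi> * l (u c)))"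
        by (rule sum_mono) (use Suc branch_Omega x in \<open>auto simp: \<psi>_def l_def u_def\<close>)
      thus ?thesis using sk by (simp add: mult_left_mono)
    qed
    also have "\<dots> = sup_norm \<Phi> * (Lop b \<zeta> p g k ^^ Suc n) (\<lambda>_. 1::real) x"
      by (simp add: Lop_real l_def u_def sk_def sum_distrib_left algebra_simps)
    finally show "norm ((Lop b \<zeta> p g k ^^ Suc n) \<Phi> x) \<le> sup_norm \<Phi> * (Lop b \<zeta> p g k ^^ Suc n) (\<lambda>_. 1::real) x" .
  qed
qed

definition "D = G / (1 - \<eta> powr \<beta>)"

lemma D_props: "0 \<le> D" "G + D * \<eta> powr \<beta> = D"
  using G_nonneg eb by (auto simp: D_def field_simps)

lemma ratio: "\<forall>x\<in>Omega. \<forall>y\<in>Omega. (Lop b \<zeta> p g k ^^ n) (\<lambda>_. 1::real) y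
   \<le> exp (D * d x y powr \<beta>) * (Lop b \<zeta> p g k ^^ n) (\<lambda>_. 1::real) x"
proof (induction n)
  case 0 thus ?case using D_props by simp
next
  case (Suc n)
  show ?case
  proof (intro ballI)
    fix x y assume x: "x \<in> Omega" and y: "y \<in> Omega"
    define l where "l = (Lop b \<zeta> p g k ^^ n) (\<lambda>_. 1::real)"
    define u where "u = (\<lambda>c. branch_pt \<zeta> p k c x)"
    define v where "v = (\<lambda>c. branch_pt \<zeta> p k c y)"
    define sk where "sk = 1 / real b ^ (2 * k + 1)"
    have sk: "0 < sk" using s_pos sk_def by simp
    have "(\<Sum>c\<in>branches b k. exp (g (v c)) * l (v c)) \<le> (\<Sum>c\<in>branches b k. exp (D * d x y powr \<beta>) * (exp (g (u c)) * l (u c)))"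
    proof (rule sum_mono)
      fix c assume c: "c \<in> branches b k"
      have uv: "u c \<in> Omega" "v c \<in> Omega" using branch_Omega x y c u_def v_def by auto
      show "exp (g (v c)) * l (v c) \<le> exp (D * d x y powr \<beta>) * (exp (g (u c)) * l (u c))"
      proof (rule ratio_arith)
        show "\<bar>g (v c) - g (u c)\<bar> \<le> G * d x y powr \<beta>"
          using g_diff[OF x y c] by (simp add: u_def v_def abs_minus_commute)
        show "l (v c) \<le> exp (D * d (u c) (v c) powr \<beta>) * l (u c)" using Suc uv l_def by auto
        show "0 \<le> l (u c)" "0 \<le> l (v c)" using L1_pos uv l_def by (auto intro: less_imp_le)
        show "d (u c) (v c) powr \<beta> \<le> \<eta> powr \<beta> * d x y powr \<beta>"
          using dpow_branch[OF x y c] u_def v_def by simp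
      qed (use D_props in auto)
    qed
    hence "sk * (\<Sum>c\<in>branches b k. exp (g (v c)) * l (v c)) \<le> sk * (\<Sum>c\<in>branches b k. exp (D * d x y powr \<beta>) * (exp (g (u c)) * l (u c)))"
      using sk by (simp add: mult_left_mono)
    thus "(Lop b \<zeta> p g k ^^ Suc n) (\<lambda>_. 1::real) y
       \<le> exp (D * d x y powr \<beta>) * (Lop b \<zeta> p g k ^^ Suc n) (\<lambda>_. 1::real) x"
      by (simp add: Lop_real l_def u_def v_def sk_def sum_distrib_left algebra_simps)
  qed
qed

definition "E = G * exp ((G + D) * B powr \<beta>)"
definition "C4 = E / (1 - \<eta> powr \<beta>) + 1"

lemma E_nonneg: "0 \<le> E" using G_nonneg by (simp add: E_def)

lemma C4_props: "0 < C4" "C4 * \<eta> powr \<beta> + E \<le> C4"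
proof -
  have "E / (1 - \<eta> powr \<beta>) \<ge> 0" using E_nonneg eb by simp
  thus "0 < C4" by (simp add: C4_def)
  have "C4 * (1 - \<eta> powr \<beta>) = E + (1 - \<eta> powr \<beta>)" using eb by (simp add: C4_def field_simps)
  thus "C4 * \<eta> powr \<beta> + E \<le> C4" using eb by (simp add: algebra_simps)
qed

lemma sup_norm_nonneg:
  fixes \<Phi> :: "(int \<Rightarrow> real) \<Rightarrow> 'a::real_normed_vector"
  assumes "bdd_above ((\<lambda>x. norm (\<Phi> x)) ` Omega)"
  shows "0 \<le> sup_norm \<Phi>"
  unfolding sup_norm_def using two_points(1) by (rule cSUP_upper2[OF assms]) simp

lemma main_step:
  fixes \<Phi> :: "(int \<Rightarrow> real) \<Rightarrow> 'a::real_normed_vector"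
  assumes Pb: "bdd_above ((\<lambda>x. norm (\<Phi> x)) ` Omega)"
    and Ph: "bdd_above (holder_quots dI \<theta> p \<beta> \<Phi>)"
    and IH: "\<forall>u\<in>Omega. \<forall>v\<in>Omega. trunc p k u = u \<longrightarrow> trunc p k v = v \<longrightarrow>
      norm ((Lop b \<zeta> p g k ^^ n) \<Phi> u - (Lop b \<zeta> p g k ^^ n) \<Phi> v)
        \<le> (holder_semi dI \<theta> p \<beta> \<Phi> * \<eta> powr (\<beta> * real n) + C4 * sup_norm \<Phi>)
            * (Lop b \<zeta> p g k ^^ n) (\<lambda>_. 1::real) u * d u v powr \<beta>"
    and x: "x \<in> Omega" and y: "y \<in> Omega"
  shows "norm ((Lop b \<zeta> p g k ^^ Suc n) \<Phi> x - (Lop b \<zeta> p g k ^^ Suc n) \<Phi> y)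
        \<le> (holder_semi dI \<theta> p \<beta> \<Phi> * \<eta> powr (\<beta> * real (Suc n)) + C4 * sup_norm \<Phi>)
            * (Lop b \<zeta> p g k ^^ Suc n) (\<lambda>_. 1::real) x * d x y powr \<beta>"
proof -
  define A where "A = holder_semi dI \<theta> p \<beta> \<Phi>"
  define S where "S = sup_norm \<Phi>"
  define Q0 where "Q0 = A * \<eta> powr (\<beta> * real n) + C4 * S"
  define Q1 where "Q1 = A * \<eta> powr (\<beta> * real (Suc n)) + C4 * S"
  define \<psi> where "\<psi> = (Lop b \<zeta> p g k ^^ n) \<Phi>"
  define l where "l = (Lop b \<zeta> p g k ^^ n) (\<lambda>_. 1::real)"
  define u where "u = (\<lambda>c. branch_pt \<zeta> p k c x)"
  define v where "v = (\<lambda>c. branch_pt \<zeta> p k c y)"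
  define sk where "sk = 1 / real b ^ (2 * k + 1)"
  define dd where "dd = d x y powr \<beta>"
  have sk: "0 < sk" using s_pos sk_def by simp
  have A: "0 \<le> A" using holder_nonneg[OF Ph] A_def by simp
  have S: "0 \<le> S" using sup_norm_nonneg[OF Pb] S_def by simp
  have Q0: "0 \<le> Q0" using A S C4_props by (simp add: Q0_def)
  have dd: "0 \<le> dd" by (simp add: dd_def)
  have Q01: "Q0 * \<eta> powr \<beta> + E * S \<le> Q1"
  proof -
    have "Q0 * \<eta> powr \<beta> + E * S = A * \<eta> powr (\<beta> * real (Suc n)) + (C4 * \<eta> powr \<beta> + E) * S"
      by (simp add: Q0_def algebra_simps powr_add)
    also have "\<dots> \<le> Q1" using C4_props S by (simp add: Q1_def mult_right_mono)
    finally show ?thesis .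
  qed
  have eq: "(Lop b \<zeta> p g k ^^ Suc n) \<Phi> x - (Lop b \<zeta> p g k ^^ Suc n) \<Phi> y
     = sk *\<^sub>R (\<Sum>c\<in>branches b k. exp (g (u c)) *\<^sub>R \<psi> (u c) - exp (g (v c)) *\<^sub>R \<psi> (v c))"
    by (simp add: Lop_def \<psi>_def u_def v_def sk_def scaleR_diff_right sum_subtractf)
  have "norm ((Lop b \<zeta> p g k ^^ Suc n) \<Phi> x - (Lop b \<zeta> p g k ^^ Suc n) \<Phi> y)
     = sk * norm (\<Sum>c\<in>branches b k. exp (g (u c)) *\<^sub>R \<psi> (u c) - exp (g (v c)) *\<^sub>R \<psi> (v c))"
    using sk by (simp only: eq norm_scaleR)
  also have "\<dots> \<le> sk * (\<Sum>c\<in>branches b k. norm (exp (g (u c)) *\<^sub>R \<psi> (u c) - exp (g (v c)) *\<^sub>R \<psi> (v c)))"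
    using sk norm_sum by (simp add: mult_left_mono norm_sum)
  also have "\<dots> \<le> sk * (\<Sum>c\<in>branches b k. exp (g (u c)) * l (u c) * dd * Q1)"
  proof -
    have "(\<Sum>c\<in>branches b k. norm (exp (g (u c)) *\<^sub>R \<psi> (u c) - exp (g (v c)) *\<^sub>R \<psi> (v c)))
       \<le> (\<Sum>c\<in>branches b k. exp (g (u c)) * l (u c) * dd * Q1)"
    proof (rule sum_mono)
      fix c assume c: "c \<in> branches b k"
      have uv: "u c \<in> Omega" "v c \<in> Omega" using branch_Omega x y c u_def v_def by auto
      have tr: "trunc p k (u c) = u c" "trunc p k (v c) = v c" by (simp_all add: u_def v_def trunc_branch)
      have lu: "0 \<le> l (u c)" "0 \<le> l (v c)" using L1_pos uv l_def by (auto intro: less_imp_le)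
      have duv: "d (u c) (v c) powr \<beta> \<le> \<eta> powr \<beta> * dd"
        using dpow_branch[OF x y c] u_def v_def dd_def by simp
      have duvB: "d (u c) (v c) powr \<beta> \<le> B powr \<beta>" using dpow_le_B[OF uv] .
      have ddB: "dd \<le> B powr \<beta>" using dpow_le_B[OF x y] dd_def by simp
      have "norm (exp (g (u c)) *\<^sub>R \<psi> (u c) - exp (g (v c)) *\<^sub>R \<psi> (v c))
          \<le> exp (g (u c)) * norm (\<psi> (u c) - \<psi> (v c)) + \<bar>exp (g (u c)) - exp (g (v c))\<bar> * norm (\<psi> (v c))"
        by (rule scaleR_diff_norm) simp
      also have "\<dots> \<le> exp (g (u c)) * l (u c) * dd * Q1"
      proof (rule term_arith[where S = S and E = E and G = G and D = D and Bb = "B powr \<beta>" and Qa = Q0 and eb = "\<eta> powr \<beta>"])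
        show "0 < exp (g (u c))" "0 \<le> l (u c)" "0 \<le> S" "0 \<le> dd" using lu S dd by auto
        have "norm (\<psi> (u c) - \<psi> (v c)) \<le> Q0 * l (u c) * d (u c) (v c) powr \<beta>"
          using IH uv tr unfolding Q0_def A_def S_def \<psi>_def l_def by auto
        also have "\<dots> \<le> Q0 * l (u c) * (\<eta> powr \<beta> * dd)"
          using duv Q0 lu by (simp add: mult_left_mono)
        finally show "norm (\<psi> (u c) - \<psi> (v c)) \<le> Q0 * l (u c) * (\<eta> powr \<beta> * dd)" .
        have gd: "\<bar>g (v c) - g (u c)\<bar> \<le> G * dd"
          using g_diff[OF x y c] by (simp add: u_def v_def dd_def abs_minus_commute)
        have gd2: "\<bar>g (v c) - g (u c)\<bar> \<le> G * B powr \<beta>"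
          using gd ddB G_nonneg by (meson mult_left_mono order_trans)
        have "\<bar>exp (g (u c)) - exp (g (v c))\<bar> \<le> exp (g (u c)) * (\<bar>g (v c) - g (u c)\<bar> * exp \<bar>g (v c) - g (u c)\<bar>)"
          by (rule exp_diff)
        also have "\<dots> \<le> exp (g (u c)) * (G * dd * exp (G * B powr \<beta>))"
          using gd gd2 G_nonneg dd by (intro mult_left_mono mult_mono) auto
        finally show "\<bar>exp (g (u c)) - exp (g (v c))\<bar> \<le> exp (g (u c)) * (G * dd * exp (G * B powr \<beta>))" .
        have "norm (\<psi> (v c)) \<le> S * l (v c)" using sup_bound[OF Pb] uv S_def \<psi>_def l_def by auto
        also have "\<dots> \<le> S * (exp (D * d (u c) (v c) powr \<beta>) * l (u c))"
          using ratio uv S l_def by (auto intro: mult_left_mono)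
        also have "\<dots> \<le> S * (exp (D * B powr \<beta>) * l (u c))"
          using duvB D_props S lu by (intro mult_left_mono mult_right_mono) (auto intro: mult_left_mono)
        finally show "norm (\<psi> (v c)) \<le> S * (exp (D * B powr \<beta>) * l (u c))" .
        show "0 \<le> norm (\<psi> (v c))" by simp
        show "E = G * exp ((G + D) * B powr \<beta>)" by (simp add: E_def)
        show "Q0 * \<eta> powr \<beta> + E * S \<le> Q1" by (rule Q01)
      qed
      finally show "norm (exp (g (u c)) *\<^sub>R \<psi> (u c) - exp (g (v c)) *\<^sub>R \<psi> (v c)) \<le> exp (g (u c)) * l (u c) * dd * Q1" .
    qed
    thus ?thesis using sk by (simp add: mult_left_mono)
  qed
  also have "\<dots> = Q1 * (Lop b \<zeta> p g k ^^ Suc n) (\<lambda>_. 1::real) x * dd"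
    by (simp add: Lop_real l_def u_def sk_def sum_distrib_left sum_distrib_right algebra_simps)
  finally show ?thesis by (simp add: Q1_def A_def S_def dd_def)
qed

lemma all_n:
  fixes \<Phi> :: "(int \<Rightarrow> real) \<Rightarrow> 'a::real_normed_vector"
  assumes Pb: "bdd_above ((\<lambda>x. norm (\<Phi> x)) ` Omega)"
    and Ph: "bdd_above (holder_quots dI \<theta> p \<beta> \<Phi>)"
  shows "\<forall>u\<in>Omega. \<forall>v\<in>Omega. trunc p k u = u \<longrightarrow> trunc p k v = v \<longrightarrow>
      norm ((Lop b \<zeta> p g k ^^ n) \<Phi> u - (Lop b \<zeta> p g k ^^ n) \<Phi> v)
        \<le> (holder_semi dI \<theta> p \<beta> \<Phi> * \<eta> powr (\<beta> * real n) + C4 * sup_norm \<Phi>)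
            * (Lop b \<zeta> p g k ^^ n) (\<lambda>_. 1::real) u * d u v powr \<beta>"
proof (induction n)
  case 0
  show ?case
  proof (intro ballI impI)
    fix u v assume uv: "u \<in> Omega" "v \<in> Omega" and tr: "trunc p k u = u" "trunc p k v = v"
    have "norm (\<Phi> u - \<Phi> v) = norm (\<Phi> (trunc p k u) - \<Phi> (trunc p k v))" using tr by simp
    also have "\<dots> \<le> holder_semi dI \<theta> p \<beta> \<Phi> * d u v powr \<beta>" by (rule holder_le[OF Ph uv])
    also have "\<dots> \<le> (holder_semi dI \<theta> p \<beta> \<Phi> + C4 * sup_norm \<Phi>) * d u v powr \<beta>"
      using C4_props sup_norm_nonneg[OF Pb] by (simp add: mult_right_mono)
    finally show "norm ((Lop b \<zeta> p g k ^^ 0) \<Phi> u - (Lop b \<zeta> p g k ^^ 0) \<Phi> v)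
        \<le> (holder_semi dI \<theta> p \<beta> \<Phi> * \<eta> powr (\<beta> * real 0) + C4 * sup_norm \<Phi>)
            * (Lop b \<zeta> p g k ^^ 0) (\<lambda>_. 1::real) u * d u v powr \<beta>" using \<eta> by simp
  qed
next
  case (Suc n)
  thus ?case using main_step[OF Pb Ph Suc.IH] by blast
qed

lemma pointwise:
  fixes \<Phi> :: "(int \<Rightarrow> real) \<Rightarrow> 'a::real_normed_vector"
  assumes Pb: "bdd_above ((\<lambda>x. norm (\<Phi> x)) ` Omega)"
    and Ph: "bdd_above (holder_quots dI \<theta> p \<beta> \<Phi>)"
    and n: "1 \<le> n" and x: "x \<in> Omega" and y: "y \<in> Omega"
  shows "norm ((Lop b \<zeta> p g k ^^ n) \<Phi> x - (Lop b \<zeta> p g k ^^ n) \<Phi> y)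
        \<le> (holder_semi dI \<theta> p \<beta> \<Phi> * \<eta> powr (\<beta> * real n) + C4 * sup_norm \<Phi>)
            * (Lop b \<zeta> p g k ^^ n) (\<lambda>_. 1::real) x * d x y powr \<beta>"
proof -
  obtain m where m: "n = Suc m" using n by (cases n) auto
  show ?thesis unfolding m by (rule main_step[OF Pb Ph all_n[OF Pb Ph] x y])
qed

lemma semi:
  fixes \<Phi> :: "(int \<Rightarrow> real) \<Rightarrow> 'a::real_normed_vector"
  assumes Pb: "bdd_above ((\<lambda>x. norm (\<Phi> x)) ` Omega)"
    and Ph: "bdd_above (holder_quots dI \<theta> p \<beta> \<Phi>)"
    and n: "1 \<le> n"
  shows "holder_semi dI \<theta> p \<beta> ((Lop b \<zeta> p g k ^^ n) \<Phi>)
        \<le> (holder_semi dI \<theta> p \<beta> \<Phi> * \<eta> powr (\<beta> * real n) + C4 * sup_norm \<Phi>)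
           * sup_norm ((Lop b \<zeta> p g k ^^ n) (\<lambda>_. 1::real))"
proof -
  define Q where "Q = holder_semi dI \<theta> p \<beta> \<Phi> * \<eta> powr (\<beta> * real n) + C4 * sup_norm \<Phi>"
  define l where "l = (Lop b \<zeta> p g k ^^ n) (\<lambda>_. 1::real)"
  have Q: "0 \<le> Q" unfolding Q_def using holder_nonneg[OF Ph] sup_norm_nonneg[OF Pb] C4_props by simp
  have lb: "bdd_above ((\<lambda>x. norm (l x)) ` Omega)"
  proof (rule bdd_aboveI2)
    fix x assume "x \<in> Omega"
    thus "norm (l x) \<le> Kc k ^ n" using L1_bdd L1_pos l_def by (auto simp: abs_of_pos)
  qed
  have ls: "l z \<le> sup_norm l" if "z \<in> Omega" for z
  proof -
    have "l z = norm (l z)" using L1_pos that l_def by (auto simp: abs_of_pos)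
    also have "\<dots> \<le> sup_norm l" unfolding sup_norm_def by (rule cSUP_upper[OF that lb])
    finally show ?thesis .
  qed
  have "Sup (holder_quots dI \<theta> p \<beta> ((Lop b \<zeta> p g k ^^ n) \<Phi>)) \<le> Q * sup_norm l"
  proof (rule cSup_least)
    show "holder_quots dI \<theta> p \<beta> ((Lop b \<zeta> p g k ^^ n) \<Phi>) \<noteq> {}"
      unfolding holder_quots_def using two_points by blast
  next
    fix q assume "q \<in> holder_quots dI \<theta> p \<beta> ((Lop b \<zeta> p g k ^^ n) \<Phi>)"
    then obtain m x y where q: "q = norm ((Lop b \<zeta> p g k ^^ n) \<Phi> (trunc p m x) - (Lop b \<zeta> p g k ^^ n) \<Phi> (trunc p m y)) / d x y powr \<beta>"
      and x: "x \<in> Omega" and y: "y \<in> Omega" and xy: "x \<noteq> y"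
      unfolding holder_quots_def by blast
    have tx: "trunc p m x \<in> Omega" "trunc p m y \<in> Omega" using trunc_Omega x y by auto
    have D: "0 < d x y powr \<beta>" using d_pos[OF x y xy] by simp
    have "norm ((Lop b \<zeta> p g k ^^ n) \<Phi> (trunc p m x) - (Lop b \<zeta> p g k ^^ n) \<Phi> (trunc p m y))
        \<le> Q * l (trunc p m x) * d (trunc p m x) (trunc p m y) powr \<beta>"
      using pointwise[OF Pb Ph n tx] Q_def l_def by simp
    also have "\<dots> \<le> Q * sup_norm l * d x y powr \<beta>"
    proof (rule mult_mono)
      show "Q * l (trunc p m x) \<le> Q * sup_norm l" using ls[OF tx(1)] Q by (simp add: mult_left_mono)
      show "d (trunc p m x) (trunc p m y) powr \<beta> \<le> d x y powr \<beta>"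
        using d_trunc[OF x y] d_nonneg[OF tx] \<beta> by (simp add: powr_mono2)
      show "0 \<le> Q * sup_norm l" using Q ls[OF x] L1_pos x l_def
        by (metis less_imp_le mult_nonneg_nonneg order_trans)
    qed simp
    finally show "q \<le> Q * sup_norm l" unfolding q using D by (simp add: divide_le_eq)
  qed
  thus ?thesis by (simp add: holder_semi_def Q_def l_def)
qed

end

theorem mainTheorem8:
  fixes dI :: "real \<Rightarrow> real \<Rightarrow> real" and \<theta> \<eta> \<beta> p lam :: real
    and \<tau> :: "real \<Rightarrow> real" and b :: nat and \<zeta> :: "nat \<Rightarrow> real \<Rightarrow> real"
    and f h :: "(int \<Rightarrow> real) \<Rightarrow> real" and M :: "(int \<Rightarrow> real) measure"
  assumes dI_nonneg: "\<forall>s\<in>Iset. \<forall>t\<in>Iset. 0 \<le> dI s t"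
    and dI_zero: "\<forall>s\<in>Iset. \<forall>t\<in>Iset. dI s t = 0 \<longleftrightarrow> s = t"
    and dI_sym: "\<forall>s\<in>Iset. \<forall>t\<in>Iset. dI s t = dI t s"
    and dI_tri: "\<forall>s\<in>Iset. \<forall>t\<in>Iset. \<forall>u\<in>Iset. dI s u \<le> dI s t + dI t u"
    and dI_bdd: "\<exists>B. \<forall>s\<in>Iset. \<forall>t\<in>Iset. dI s t \<le> B"
    and \<theta>: "0 < \<theta>" "\<theta> < 1"
    and \<beta>: "0 < \<beta>" "\<beta> \<le> 1"
    and \<eta>: "0 < \<eta>" "\<eta> < 1"
    and tau_maps: "\<tau> ` Iset \<subseteq> Iset"
    and b_pos: "1 \<le> b"
    and zeta_maps: "\<forall>j<b. \<forall>t\<in>Iset. \<zeta> j t \<in> Iset \<and> \<tau> (\<zeta> j t) = t"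
    and preimage: "\<forall>t\<in>Iset. {s\<in>Iset. \<tau> s = t} = (\<lambda>j. \<zeta> j t) ` {..<b}"
    and card_preimage: "\<forall>t\<in>Iset. card {s\<in>Iset. \<tau> s = t} = b"
    and full_branch: "\<forall>j<b. is_interval (\<zeta> j ` Iset)"
    and contr: "\<forall>j<b. \<forall>s\<in>Iset. \<forall>t\<in>Iset. dI (\<zeta> j s) (\<zeta> j t) \<le> \<eta> * dI s t"
    and fixpt: "p \<in> Iset" "\<tau> p = p"
    and f_C: "classC dI \<theta> p \<beta> f"
    and M_prob: "prob_space M"
    and M_space: "space M = Omega"
    and M_borel: "sets M = sigma_sets Omega {U. open_Om dI \<theta> U}"
    and M_eigen: "\<forall>\<Phi>::(int \<Rightarrow> real) \<Rightarrow> real. classC dI \<theta> p \<beta> \<Phi> \<longrightarrow>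
        (\<integral>x. lim (\<lambda>k. Lop b \<zeta> p f k \<Phi> x) \<partial>M) = lam * (\<integral>x. \<Phi> x \<partial>M)"
    and lam_def: "lam = (\<integral>x. lim (\<lambda>k. Lop b \<zeta> p f k (\<lambda>_. 1::real) x) \<partial>M)"
    and h_C: "classC dI \<theta> p \<beta> h"
    and h_pos: "\<forall>x\<in>Omega. 0 < h x"
    and h_eigen: "\<forall>x\<in>Omega. (\<lambda>k. Lop b \<zeta> p f k h x) \<longlonglongrightarrow> lam * h x"
    and h_norm: "(\<integral>x. h x \<partial>M) = 1"
    and h_reg: "\<forall>x\<in>Omega. \<forall>y\<in>Omega.
        h x \<le> exp (holder_semi dI \<theta> p \<beta> f * (\<eta> powr \<beta> / (1 - \<eta> powr \<beta>))
                   * dOm dI \<theta> x y powr \<beta>) * h y"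
  defines "g \<equiv> (\<lambda>x. f x - ln lam - ln (h (tau_bar \<tau> x)) + ln (h x))"
  shows "\<exists>C4>0. \<forall>\<Phi>::(int \<Rightarrow> real) \<Rightarrow> complex. classC dI \<theta> p \<beta> \<Phi> \<longrightarrow>
    (\<forall>k\<ge>1. \<forall>n\<ge>1.
      holder_semi dI \<theta> p \<beta> ((Lop b \<zeta> p g k ^^ n) \<Phi>)
        \<le> (holder_semi dI \<theta> p \<beta> \<Phi> * \<eta> powr (\<beta> * real n) + C4 * sup_norm \<Phi>)
           * sup_norm ((Lop b \<zeta> p g k ^^ n) (\<lambda>_. 1::real))
      \<and> (\<forall>x\<in>Omega. \<forall>y\<in>Omega.
          norm ((Lop b \<zeta> p g k ^^ n) \<Phi> x - (Lop b \<zeta> p g k ^^ n) \<Phi> y)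
            \<le> (holder_semi dI \<theta> p \<beta> \<Phi> * \<eta> powr (\<beta> * real n) + C4 * sup_norm \<Phi>)
               * (Lop b \<zeta> p g k ^^ n) (\<lambda>_. 1::real) x * dOm dI \<theta> x y powr \<beta>))"
proof -
  obtain B where B: "\<forall>s\<in>Iset. \<forall>t\<in>Iset. dI s t \<le> B" using dI_bdd by blast
  have gd: "g = (\<lambda>x. f x - ln lam - ln (h (tau_bar \<tau> x)) + ln (h x))" using assms by simp
  interpret M: msetup dI \<theta> B \<beta> \<eta> p lam \<tau> b \<zeta> f h g
    using dI_nonneg dI_zero dI_sym B \<theta> \<beta> \<eta> tau_maps b_pos zeta_maps contr fixpt f_C h_pos h_reg gd
    by unfold_locales (auto simp: classC_def)
  show ?thesis
  proof (intro exI[of _ M.C4] conjI allI impI ballI)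
    show "0 < M.C4" by (rule M.C4_props(1))
  next
    fix \<Phi> :: "(int \<Rightarrow> real) \<Rightarrow> complex" and k n :: nat
    assume C: "classC dI \<theta> p \<beta> \<Phi>" and n: "1 \<le> n"
    have Pb: "bdd_above ((\<lambda>x. norm (\<Phi> x)) ` Omega)" and Ph: "bdd_above (holder_quots dI \<theta> p \<beta> \<Phi>)"
      using C by (auto simp: classC_def)
    show "holder_semi dI \<theta> p \<beta> ((Lop b \<zeta> p g k ^^ n) \<Phi>)
        \<le> (holder_semi dI \<theta> p \<beta> \<Phi> * \<eta> powr (\<beta> * real n) + M.C4 * sup_norm \<Phi>)
           * sup_norm ((Lop b \<zeta> p g k ^^ n) (\<lambda>_. 1::real))"
      by (rule M.semi[OF Pb Ph n])
    fix x y assume x: "x \<in> Omega" and y: "y \<in> Omega"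
    show "norm ((Lop b \<zeta> p g k ^^ n) \<Phi> x - (Lop b \<zeta> p g k ^^ n) \<Phi> y)
            \<le> (holder_semi dI \<theta> p \<beta> \<Phi> * \<eta> powr (\<beta> * real n) + M.C4 * sup_norm \<Phi>)
               * (Lop b \<zeta> p g k ^^ n) (\<lambda>_. 1::real) x * dOm dI \<theta> x y powr \<beta>"
      by (rule M.pointwise[OF Pb Ph n x y])
  qed
qed

end
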